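(* Let $G=(K\cup I,E)$ be a split graph such that no vertex $i\in I$ satisfies $N(i)=K$, and let $(V,\mathcal{F})$ be its split graph vertex shelling antimatroid. Then the set of paths of $(V,\mathcal{F})$ equals $P=P_1\cup P_2\cup P_3$, where $P_1=\{\{i\}: i\in I\}$, $P_2=\{\{k\}\cup(N(k)\cap I): k\in K\}$, $P_3=\{\operatorname{fos}(i)\cup\{k\}\cup\big((N(k)\cap I)\setminus\{i\}\big): i\in I,\ k\in N(i)\}$.
   Context: A split graph $G=(K\cup I,E)$ is a finite simple graph whose vertex set $V=K\cup I$ comes with a fixed partition into a clique $K$ and an independent set $I$. We write $u\sim v$ for adjacency; for $F\subseteq V$, $N(F)$ is the set of vertices of $V\setminus F$ adjacent to some vertex of $F$, and $N(v)=N(\{v\})$. A vertex is simplicial if its neighbours induce a clique. The split graph vertex shelling antimatroid of $G$ is $(V,\mathcal{F})$ where $F\subseteq V$ is feasible iff there is an ordering $f_1,\dots,f_{|F|}$ of $F$ such that each $f_j$ is simplicial in $G$ minus $\{f_1,\dots,f_{j-1}\}$ (the empty set is feasible). For $i\in I$, $\operatorname{fos}(i)=\{k\in K: k\not\sim i\}\cup\{i'\in I: N(i')\not\subseteq N(i)\}$. A path of an antimatroid $(V,\mathcal{F})$ is a nonempty feasible set that is not the union of two feasible sets both different from it (equivalently, a feasible set containing exactly one element whose removal leaves a feasible set). *)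

theory Defs
  imports Main
begin

definition split_graph :: "'a set \<Rightarrow> 'a set \<Rightarrow> ('a \<Rightarrow> 'a \<Rightarrow> bool) \<Rightarrow> bool" where
  "split_graph K I adj \<longleftrightarrow>
     finite K \<and> finite I \<and> K \<inter> I = {} \<and>
     (\<forall>x y. adj x y \<longrightarrow> adj y x) \<and>
     (\<forall>x. \<not> adj x x) \<and>
     (\<forall>x y. adj x y \<longrightarrow> x \<in> K \<union> I \<and> y \<in> K \<union> I) \<and>
     (\<forall>x\<in>K. \<forall>y\<in>K. x \<noteq> y \<longrightarrow> adj x y) \<and>
     (\<forall>x\<in>I. \<forall>y\<in>I. \<not> adj x y)"

definition nbhd :: "'a set \<Rightarrow> ('a \<Rightarrow> 'a \<Rightarrow> bool) \<Rightarrow> 'a set \<Rightarrow> 'a set" where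
  "nbhd V adj F = {v \<in> V - F. \<exists>f\<in>F. adj f v}"

definition simplicial :: "('a \<Rightarrow> 'a \<Rightarrow> bool) \<Rightarrow> 'a set \<Rightarrow> 'a \<Rightarrow> bool" where
  "simplicial adj W v \<longleftrightarrow> v \<in> W \<and>
     (\<forall>x\<in>W. \<forall>y\<in>W. adj v x \<and> adj v y \<and> x \<noteq> y \<longrightarrow> adj x y)"

definition shelling_feasible :: "'a set \<Rightarrow> ('a \<Rightarrow> 'a \<Rightarrow> bool) \<Rightarrow> 'a set \<Rightarrow> bool" where
  "shelling_feasible V adj F \<longleftrightarrow>
     (\<exists>xs. distinct xs \<and> set xs = F \<and>
        (\<forall>j < length xs. simplicial adj (V - set (take j xs)) (xs ! j)))"

definition antimatroid_path :: "('a set \<Rightarrow> bool) \<Rightarrow> 'a set \<Rightarrow> bool" where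
  "antimatroid_path feas F \<longleftrightarrow> F \<noteq> {} \<and> feas F \<and>
     \<not> (\<exists>A B. feas A \<and> feas B \<and> A \<noteq> F \<and> B \<noteq> F \<and> F = A \<union> B)"

definition fos :: "'a set \<Rightarrow> 'a set \<Rightarrow> ('a \<Rightarrow> 'a \<Rightarrow> bool) \<Rightarrow> 'a \<Rightarrow> 'a set" where
  "fos K I adj i = {k \<in> K. \<not> adj k i} \<union>
     {i' \<in> I. \<not> (nbhd (K \<union> I) adj {i'} \<subseteq> nbhd (K \<union> I) adj {i})}"

end

theory Submission
  imports Defs
begin

locale sg =
  fixes K I :: "'a set" and adj :: "'a \<Rightarrow> 'a \<Rightarrow> bool"
  assumes sgr: "split_graph K I adj"
begin

abbreviation feas where "feas \<equiv> shelling_feasible (K \<union> I) adj"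

lemma finK: "finite K" and finI: "finite I" and disj: "K \<inter> I = {}"
  and sym: "adj x y \<Longrightarrow> adj y x" and irr: "\<not> adj x x"
  and inV: "adj x y \<Longrightarrow> x \<in> K \<union> I \<and> y \<in> K \<union> I"
  and cliq: "x \<in> K \<Longrightarrow> y \<in> K \<Longrightarrow> x \<noteq> y \<Longrightarrow> adj x y"
  and ind: "x \<in> I \<Longrightarrow> y \<in> I \<Longrightarrow> \<not> adj x y"
  using sgr unfolding split_graph_def by blast+

lemma nbhd_single: "nbhd (K \<union> I) adj {v} = {u. adj v u}"
  unfolding nbhd_def using inV irr by blast

lemma fos_eq: "fos K I adj i = (K - {u. adj i u}) \<union> {j\<in>I. \<not> {u. adj j u} \<subseteq> {u. adj i u}}"
  unfolding fos_def nbhd_single using sym by blast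

lemma simp_I: "i \<in> I \<Longrightarrow> i \<in> W \<Longrightarrow> simplicial adj W i"
  unfolding simplicial_def using inV ind cliq by blast

lemma feas_empty: "feas {}"
  unfolding shelling_feasible_def by (rule exI[of _ "[]"]) simp

lemma feas_snoc:
  assumes "feas A" "x \<notin> A" "simplicial adj (K \<union> I - A) x"
  shows "feas (insert x A)"
proof -
  obtain xs where xs: "distinct xs" "set xs = A"
    "\<forall>j<length xs. simplicial adj (K \<union> I - set (take j xs)) (xs ! j)"
    using assms(1) unfolding shelling_feasible_def by blast
  show ?thesis unfolding shelling_feasible_def
  proof (rule exI[of _ "xs @ [x]"], intro conjI allI impI)
    show "distinct (xs @ [x])" using xs assms(2) by simp
    show "set (xs @ [x]) = insert x A" using xs by auto
    fix j assume j: "j < length (xs @ [x])"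
    show "simplicial adj (K \<union> I - set (take j (xs @ [x]))) ((xs @ [x]) ! j)"
    proof (cases "j < length xs")
      case True then show ?thesis using xs(3) by (simp add: nth_append)
    next
      case False then have "j = length xs" using j by simp
      then show ?thesis using assms(3) xs(2) by (simp add: nth_append)
    qed
  qed
qed

lemma feas_add:
  assumes "finite T" "feas A" "\<forall>t\<in>T. simplicial adj (K \<union> I - A) t"
  shows "feas (A \<union> T)"
  using assms
proof (induction T rule: finite_induct)
  case empty then show ?case by simp
next
  case (insert t T)
  then have IH: "feas (A \<union> T)" by blast
  show ?case
  proof (cases "t \<in> A \<union> T")
    case True then show ?thesis using IH by (simp add: insert_absorb)
  next
    case False
    have s: "simplicial adj (K \<union> I - A) t" using insert by blast
    then have "simplicial adj (K \<union> I - (A \<union> T)) t"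
      using False unfolding simplicial_def by blast
    then have "feas (insert t (A \<union> T))" using feas_snoc IH False by blast
    then show ?thesis by simp
  qed
qed

lemma feas_I: assumes "S \<subseteq> I" shows "feas S"
proof -
  have "finite S" using assms finI by (rule finite_subset)
  moreover have "\<forall>t\<in>S. simplicial adj (K \<union> I - {}) t"
  proof
    fix t assume "t \<in> S" then have "t \<in> I" using assms by blast
    then show "simplicial adj (K \<union> I - {}) t" by (intro simp_I) auto
  qed
  ultimately show ?thesis using feas_add[OF _ feas_empty, of S] by simp
qed

lemma L1':
  assumes "feas A" "x \<in> A" "y \<in> A"
  shows "simplicial adj ((K \<union> I - A) \<union> {x, y}) x \<or> simplicial adj ((K \<union> I - A) \<union> {x, y}) y"
proof -
  obtain xs where xs: "distinct xs" "set xs = A"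
    "\<forall>j<length xs. simplicial adj (K \<union> I - set (take j xs)) (xs ! j)"
    using assms(1) unfolding shelling_feasible_def by blast
  obtain p where p: "p < length xs" "x = xs ! p" using assms(2) xs(2) by (metis in_set_conv_nth)
  obtain q where q: "q < length xs" "y = xs ! q" using assms(3) xs(2) by (metis in_set_conv_nth)
  have key: "simplicial adj ((K \<union> I - A) \<union> {xs!a, xs!b}) (xs!a)"
    if ab: "a \<le> b" "b < length xs" for a b
  proof -
    have sa: "simplicial adj (K \<union> I - set (take a xs)) (xs ! a)" using xs(3) ab by simp
    have sb: "simplicial adj (K \<union> I - set (take b xs)) (xs ! b)" using xs(3) ab by simp
    have nb: "xs ! b \<notin> set (take a xs)"
    proof
      assume "xs ! b \<in> set (take a xs)"
      then obtain r where r: "r < length (take a xs)" "take a xs ! r = xs ! b"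
        by (metis in_set_conv_nth)
      then have "xs ! r = xs ! b" "r < a" by auto
      then show False using xs(1) ab nth_eq_iff_index_eq by fastforce
    qed
    have "xs ! b \<in> K \<union> I" using sb unfolding simplicial_def by blast
    then have sub: "(K \<union> I - A) \<union> {xs!a, xs!b} \<subseteq> K \<union> I - set (take a xs)"
      using sa nb xs(2) set_take_subset[of a xs] unfolding simplicial_def by blast
    show ?thesis using sa sub unfolding simplicial_def by blast
  qed
  show ?thesis
  proof (cases "p \<le> q")
    case True then show ?thesis using key[of p q] p q by simp
  next
    case False then show ?thesis using key[of q p] p q by (simp add: insert_commute)
  qed
qed

lemma L1: "feas A \<Longrightarrow> x \<in> A \<Longrightarrow> simplicial adj ((K \<union> I - A) \<union> {x}) x"
  using L1'[of A x x] by simp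

lemma CORE:
  assumes A: "feas A" and k: "k \<in> A" "k \<in> K" and i: "i \<in> I" "i \<notin> A" "adj k i"
    and nk: "{u. adj k u} \<inter> I - {i} \<subseteq> A"
  shows "fos K I adj i \<subseteq> A"
proof -
  have b: "t \<in> A" if t: "t \<in> K" "\<not> adj i t" for t
  proof (rule ccontr)
    assume tA: "t \<notin> A"
    have tk: "t \<noteq> k" using t i sym by blast
    have s: "simplicial adj ((K \<union> I - A) \<union> {k}) k" using L1 A k by blast
    have "t \<noteq> i" using t i disj by blast
    moreover have "adj k t" using cliq t k tk by blast
    ultimately have "adj t i" using s tA i t unfolding simplicial_def by blast
    then show False using t sym by blast
  qed
  have c: "j \<in> A" if j: "j \<in> I" "\<not> {u. adj j u} \<subseteq> {u. adj i u}" for j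
  proof (rule ccontr)
    assume jA: "j \<notin> A"
    obtain k' where k': "adj j k'" "\<not> adj i k'" using j by blast
    have k'K: "k' \<in> K" using k' inV ind j by blast
    have k'A: "k' \<in> A" using b k'K k' by blast
    have kk: "k' \<noteq> k" using k' i sym by blast
    from L1'[OF A k(1) k'A]
    show False
    proof
      assume s: "simplicial adj ((K \<union> I - A) \<union> {k, k'}) k"
      have "i \<noteq> k'" using k'K i disj by blast
      moreover have "adj k k'" using cliq k'K k kk by blast
      ultimately have "adj i k'" using s i k'K unfolding simplicial_def by blast
      then show False using k' by blast
    next
      assume s: "simplicial adj ((K \<union> I - A) \<union> {k, k'}) k'"
      have "j \<noteq> k" using k j disj by blast
      moreover have "adj k' k" using cliq k'K k kk by blast
      moreover have "j \<in> K \<union> I" using j by blast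
      ultimately have "adj j k" using s jA k'(1) sym unfolding simplicial_def by blast
      moreover have "j \<noteq> i" using j by blast
      ultimately show False using nk jA j sym by blast
    qed
  qed
  show ?thesis unfolding fos_eq using b c sym by blast
qed

definition Q2 where "Q2 k = {k} \<union> ({u. adj k u} \<inter> I)"
definition Q3 where "Q3 i k = fos K I adj i \<union> {k} \<union> (({u. adj k u} \<inter> I) - {i})"

lemma FP2: assumes k: "k \<in> K" shows "feas (Q2 k)"
proof -
  let ?S = "{u. adj k u} \<inter> I"
  have fS: "feas ?S" by (rule feas_I) blast
  have kS: "k \<notin> ?S" using k disj by blast
  have "simplicial adj (K \<union> I - ?S) k"
    unfolding simplicial_def using k kS inV cliq by blast
  then have "feas (insert k ?S)" using feas_snoc fS kS by simp
  then show ?thesis unfolding Q2_def by simp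
qed

lemma FP3: assumes i: "i \<in> I" and ik: "adj i k" shows "feas (Q3 i k)"
proof -
  have k: "k \<in> K" using ik inV ind i by blast
  let ?S = "{j\<in>I. \<not> {u. adj j u} \<subseteq> {u. adj i u}} \<union> ({u. adj k u} \<inter> I - {i})"
  let ?T = "K - {u. adj i u}"
  have fS: "feas ?S" by (rule feas_I) blast
  have "\<forall>t\<in>?T. simplicial adj (K \<union> I - ?S) t"
  proof
    fix t assume t: "t \<in> ?T"
    have "x \<in> K" if x: "x \<in> K \<union> I - ?S" "adj t x" for x
    proof (rule ccontr)
      assume "x \<notin> K"
      then have "x \<in> I" using x by blast
      then have sub: "{u. adj x u} \<subseteq> {u. adj i u}" using x by blast
      have "adj x t" using x(2) by (rule sym)
      then have "adj i t" using sub by blast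
      then show False using t by blast
    qed
    note xK = this
    have tin: "t \<in> K \<union> I - ?S" using t disj by blast
    show "simplicial adj (K \<union> I - ?S) t" unfolding simplicial_def
    proof (intro conjI ballI impI)
      show "t \<in> K \<union> I - ?S" by (rule tin)
      fix x y assume "x \<in> K \<union> I - ?S" "y \<in> K \<union> I - ?S" "adj t x \<and> adj t y \<and> x \<noteq> y"
      then show "adj x y" using xK cliq by blast
    qed
  qed
  then have fST: "feas (?S \<union> ?T)" using feas_add[of ?T ?S] fS finK by simp
  have kn: "k \<notin> ?S \<union> ?T" using k ik disj by blast
  have "simplicial adj (K \<union> I - (?S \<union> ?T)) k"
    unfolding simplicial_def
  proof (intro conjI ballI impI)
    show "k \<in> K \<union> I - (?S \<union> ?T)" using k kn by blast
    fix x y assume x: "x \<in> K \<union> I - (?S \<union> ?T)" and y: "y \<in> K \<union> I - (?S \<union> ?T)"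
      and a: "adj k x \<and> adj k y \<and> x \<noteq> y"
    have xi: "x \<in> I \<Longrightarrow> x = i" using x a by blast
    have yi: "y \<in> I \<Longrightarrow> y = i" using y a by blast
    show "adj x y"
    proof (cases "x \<in> I")
      case True
      then have "y \<in> K" using xi yi a y by blast
      then show ?thesis using True xi y by blast
    next
      case False
      then have xK: "x \<in> K" using x by blast
      show ?thesis
      proof (cases "y \<in> I")
        case True then show ?thesis using yi x xK sym by blast
      next
        case False then show ?thesis using y xK cliq a by blast
      qed
    qed
  qed
  then have "feas (insert k (?S \<union> ?T))" using feas_snoc fST kn by blast
  moreover have "insert k (?S \<union> ?T) = Q3 i k" unfolding Q3_def fos_eq by auto
  ultimately show ?thesis by simp
qed

lemma path_intro:
  assumes "feas F" "e \<in> F" "\<And>A. feas A \<Longrightarrow> A \<subseteq> F \<Longrightarrow> e \<in> A \<Longrightarrow> A = F"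
  shows "antimatroid_path feas F"
  unfolding antimatroid_path_def using assms by blast

end

locale sg2 = sg +
  assumes noK: "\<forall>i\<in>I. nbhd (K \<union> I) adj {i} \<noteq> K"
begin

lemma E2: assumes k: "k \<in> K" and A: "feas A" "A \<subseteq> Q2 k" "k \<in> A" shows "A = Q2 k"
proof -
  have "j \<in> A" if j: "j \<in> I" "adj k j" for j
  proof (rule ccontr)
    assume jA: "j \<notin> A"
    have s: "simplicial adj ((K \<union> I - A) \<union> {k}) k" using L1 A by blast
    have "adj j k'" if k': "k' \<in> K" for k'
    proof (cases "k' = k")
      case True then show ?thesis using j sym by blast
    next
      case False
      then have "k' \<notin> A" using A(2) k' disj unfolding Q2_def by blast
      moreover have "j \<noteq> k'" using j k' disj by blast
      moreover have "adj k k'" using cliq k' k False by blast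
      ultimately show ?thesis using s j jA k' unfolding simplicial_def by blast
    qed
    then have "{u. adj j u} = K" using inV ind j by blast
    then show False using noK j nbhd_single by auto
  qed
  then show ?thesis using A unfolding Q2_def by blast
qed

lemma E3: assumes i: "i \<in> I" and ik: "adj i k" and A: "feas A" "A \<subseteq> Q3 i k" "k \<in> A"
  shows "A = Q3 i k"
proof -
  have k: "k \<in> K" using ik inV ind i by blast
  have iQ: "i \<notin> Q3 i k" unfolding Q3_def fos_eq using i k disj by blast
  then have iA: "i \<notin> A" using A by blast
  have nk: "{u. adj k u} \<inter> I - {i} \<subseteq> A"
  proof
    fix j assume j: "j \<in> {u. adj k u} \<inter> I - {i}"
    show "j \<in> A"
    proof (rule ccontr)
      assume jA: "j \<notin> A"
      have s: "simplicial adj ((K \<union> I - A) \<union> {k}) k" using L1 A by blast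
      have ki: "adj k i" using ik by (rule sym)
      have "i \<in> (K \<union> I - A) \<union> {k}" "j \<in> (K \<union> I - A) \<union> {k}" "i \<noteq> j"
        using iA i j jA by auto
      then have "adj i j" using s ki j unfolding simplicial_def by blast
      then show False using ind i j by blast
    qed
  qed
  have "fos K I adj i \<subseteq> A" using CORE[OF A(1) A(3) k i iA sym[OF ik] nk] .
  then show ?thesis using A nk unfolding Q3_def by blast
qed

lemma paths_sub:
  assumes P: "antimatroid_path feas F"
  shows "(\<exists>i. F = {i} \<and> i \<in> I) \<or> (\<exists>k. F = Q2 k \<and> k \<in> K) \<or>
         (\<exists>i k. F = Q3 i k \<and> i \<in> I \<and> adj i k)"
proof -
  have Fne: "F \<noteq> {}" and fF: "feas F"
    and nu: "\<not> (\<exists>A B. feas A \<and> feas B \<and> A \<noteq> F \<and> B \<noteq> F \<and> F = A \<union> B)"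
    using P unfolding antimatroid_path_def by blast+
  obtain xs where xs: "distinct xs" "set xs = F"
    "\<forall>j<length xs. simplicial adj (K \<union> I - set (take j xs)) (xs ! j)"
    using fF unfolding shelling_feasible_def by blast
  have xne: "xs \<noteq> []" using xs Fne by auto
  define e where "e = last xs"
  define F' where "F' = set (butlast xs)"
  have xsd: "xs = butlast xs @ [e]" using xne e_def by simp
  have eF: "e \<notin> F'" "F = insert e F'" using xs(1,2) xsd unfolding F'_def
    by (metis distinct_append disjoint_iff list.set_intros(1), metis Un_insert_right
        append_Nil2 list.simps(15) set_append sup_commute)
  have fF': "feas F'" unfolding shelling_feasible_def F'_def
  proof (rule exI[of _ "butlast xs"], intro conjI allI impI)
    show "distinct (butlast xs)" using xs(1) by (simp add: distinct_butlast)
    fix j assume j: "j < length (butlast xs)"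
    then show "simplicial adj (K \<union> I - set (take j (butlast xs))) (butlast xs ! j)"
      using xs(3) by (simp add: nth_butlast take_butlast)
  qed simp
  have se: "simplicial adj (K \<union> I - F') e"
  proof -
    have "length xs - 1 < length xs" using xne by simp
    moreover have "take (length xs - 1) xs = butlast xs" by (simp add: butlast_conv_take)
    moreover have "xs ! (length xs - 1) = e" using xne e_def by (simp add: last_conv_nth)
    ultimately show ?thesis using xs(3) F'_def by metis
  qed
  have fin: "F = Q" if Q: "feas Q" "Q \<subseteq> F" "e \<in> Q" for Q
    using nu Q fF' eF by blast
  have eV: "e \<in> K \<union> I" using se unfolding simplicial_def by blast
  show ?thesis
  proof (cases "e \<in> I")
    case True
    have "feas (insert e {})" using feas_snoc[OF feas_empty] simp_I True eV by simp
    then have "F = {e}" using fin eF by blast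
    then show ?thesis using True by blast
  next
    case False
    then have k: "e \<in> K" using eV by blast
    show ?thesis
    proof (cases "{u. adj e u} \<inter> I \<subseteq> F")
      case True
      then have "F = Q2 e" using fin[OF FP2[OF k]] eF unfolding Q2_def by blast
      then show ?thesis using k by blast
    next
      case False
      then obtain i where i: "i \<in> I" "adj e i" "i \<notin> F" by blast
      have nk: "{u. adj e u} \<inter> I - {i} \<subseteq> F"
      proof
        fix j assume j: "j \<in> {u. adj e u} \<inter> I - {i}"
        show "j \<in> F"
        proof (rule ccontr)
          assume "j \<notin> F"
          moreover have "i \<in> K \<union> I - F'" "i \<noteq> j" using i eF j by auto
          ultimately have "j \<in> K \<union> I - F'" "adj e j" "adj e i" using eF j i by auto
          then have "adj i j" using se \<open>i \<in> K \<union> I - F'\<close> \<open>i \<noteq> j\<close>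
            unfolding simplicial_def by blast
          then show False using ind i j by blast
        qed
      qed
      have "fos K I adj i \<subseteq> F" using CORE[OF fF _ k i(1) i(3) i(2) nk] eF by blast
      then have "Q3 i e \<subseteq> F" using nk eF unfolding Q3_def by blast
      have ie: "adj i e" using i(2) by (rule sym)
      have "e \<in> Q3 i e" unfolding Q3_def by blast
      then have "F = Q3 i e" using fin[OF FP3[OF i(1) ie]] \<open>Q3 i e \<subseteq> F\<close> by blast
      then show ?thesis using i(1) ie by blast
    qed
  qed
qed

end

theorem mainTheorem10:
  fixes K I :: "'a set" and adj :: "'a \<Rightarrow> 'a \<Rightarrow> bool"
  assumes "split_graph K I adj"
    and "\<forall>i\<in>I. nbhd (K \<union> I) adj {i} \<noteq> K"
  shows "{F. antimatroid_path (shelling_feasible (K \<union> I) adj) F} =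
           {{i} | i. i \<in> I}
         \<union> {{k} \<union> (nbhd (K \<union> I) adj {k} \<inter> I) | k. k \<in> K}
         \<union> {fos K I adj i \<union> {k} \<union> ((nbhd (K \<union> I) adj {k} \<inter> I) - {i}) | i k.
              i \<in> I \<and> k \<in> nbhd (K \<union> I) adj {i}}"
proof -
  interpret sg2 K I adj using assms by (unfold_locales; blast)
  show ?thesis
  proof (rule set_eqI, rule iffI)
    fix F assume "F \<in> {F. antimatroid_path feas F}"
    then show "F \<in> {{i} | i. i \<in> I}
         \<union> {{k} \<union> (nbhd (K \<union> I) adj {k} \<inter> I) | k. k \<in> K}
         \<union> {fos K I adj i \<union> {k} \<union> ((nbhd (K \<union> I) adj {k} \<inter> I) - {i}) | i k.
              i \<in> I \<and> k \<in> nbhd (K \<union> I) adj {i}}"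
      using paths_sub unfolding nbhd_single Q2_def Q3_def by blast
  next
    fix F assume "F \<in> {{i} | i. i \<in> I}
         \<union> {{k} \<union> (nbhd (K \<union> I) adj {k} \<inter> I) | k. k \<in> K}
         \<union> {fos K I adj i \<union> {k} \<union> ((nbhd (K \<union> I) adj {k} \<inter> I) - {i}) | i k.
              i \<in> I \<and> k \<in> nbhd (K \<union> I) adj {i}}"
    then have "(\<exists>i. F = {i} \<and> i \<in> I) \<or> (\<exists>k. F = Q2 k \<and> k \<in> K) \<or>
         (\<exists>i k. F = Q3 i k \<and> i \<in> I \<and> adj i k)"
      unfolding nbhd_single Q2_def Q3_def by blast
    then show "F \<in> {F. antimatroid_path feas F}"
    proof (elim disjE exE conjE)
      fix i assume F: "F = {i}" "i \<in> I"
      have "feas (insert i {})" using feas_snoc[OF feas_empty] simp_I F(2) by simp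
      then have "antimatroid_path feas F" using F by (intro path_intro[of _ i]) auto
      then show ?thesis by simp
    next
      fix k assume F: "F = Q2 k" "k \<in> K"
      have "antimatroid_path feas F" using F FP2 E2 by (intro path_intro[of _ k]) (auto simp: Q2_def)
      then show ?thesis by simp
    next
      fix i k assume F: "F = Q3 i k" "i \<in> I" "adj i k"
      have "antimatroid_path feas F" using F FP3 E3 by (intro path_intro[of _ k]) (auto simp: Q3_def)
      then show ?thesis by simp
    qed
  qed
qed

end
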